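(* Suppose the block size is infinite and let $r>0$. The solitary-or-posted-price mechanism with reserve price $r$ satisfies weak UIC, weak MIC, and $c$-weak-SCP for every integer $c\ge1$.
   Context: Setting (TFM). Each user $i$ has a true value $v_i\ge0$ and submits a single bid $b_i\ge0$. A TFM consists of an inclusion rule (run by the miner, choosing which bids to include; the block size is unbounded here) and confirmation, payment and miner-revenue rules (run by the blockchain on the included bids); the miner receives at most the total payment and the remainder is burnt. Solitary-or-posted-price mechanism with reserve $r$: include the two highest bids and every other bid that is at least $r$. Every included bid that is at least $r$ is confirmed, and the highest included bid is always confirmed (even if below $r$); all other bids are unconfirmed. Let $b_2$ be the second-highest included bid (taken to be $0$ if it does not exist). Every confirmed bid pays $\min(b_2,r)$; the miner is paid $\min(b_2,r)$; the remaining payment is burnt. Strategic players: a user, the miner, or the miner with some users; they may have users bid untruthfully after seeing all bids, inject fake bids (true value $0$), and (if the miner is involved) include any set of available bids. Weak ($1$-strict) utility: miner revenue (if the miner is in the player) plus $v-p$ for each confirmed transaction of the player (true value $v$, payment $p$), minus $(b-v)$ for each unconfirmed transaction of the player with bid $b>v$. Weak UIC: with an honest miner, each user's weak utility is maximized by truthful bidding without fake bids, whatever the other bids. Weak MIC: the miner's weak utility is maximized by honestly following the inclusion rule, whatever the bids. $c$-weak-SCP: for every coalition of the miner with between $1$ and $c$ users, joint weak utility is maximized by truthful bidding and honest miner behavior, whatever the other bids. *)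

theory Defs
  imports Complex_Main
begin

text \<open>A bid profile is a list of bids; positions in the list identify transactions.
  The position order is only used for tie-breaking among equal bids.\<close>

record tfm =
  incl_rule :: "real list \<Rightarrow> nat set"
  conf_rule :: "real list \<Rightarrow> nat set \<Rightarrow> nat \<Rightarrow> bool" \<comment> \<open>bids, included positions, position\<close>
  pay_rule  :: "real list \<Rightarrow> nat set \<Rightarrow> nat \<Rightarrow> real"
  rev_rule  :: "real list \<Rightarrow> nat set \<Rightarrow> real"

definition outranks :: "real list \<Rightarrow> nat \<Rightarrow> nat \<Rightarrow> bool" where
  "outranks bs k j \<longleftrightarrow> bs ! k > bs ! j \<or> (bs ! k = bs ! j \<and> k < j)"

definition second_bid :: "real list \<Rightarrow> nat set \<Rightarrow> real" where
  "second_bid bs I = (if card I \<ge> 2 then rev (sort (map (\<lambda>j. bs ! j) (sorted_list_of_set I))) ! 1 else 0)"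

definition sopp_price :: "real \<Rightarrow> real list \<Rightarrow> nat set \<Rightarrow> real" where
  "sopp_price r bs I = min (second_bid bs I) r"

definition sopp :: "real \<Rightarrow> tfm" where
  "sopp r = \<lparr>
     incl_rule = (\<lambda>bs. {j. j < length bs \<and>
                          (card {k. k < length bs \<and> outranks bs k j} < 2 \<or> bs ! j \<ge> r)}),
     conf_rule = (\<lambda>bs I j. j \<in> I \<and> (bs ! j \<ge> r \<or> (\<forall>k\<in>I. \<not> outranks bs k j))),
     pay_rule  = (\<lambda>bs I j. sopp_price r bs I),
     rev_rule  = (\<lambda>bs I. sopp_price r bs I) \<rparr>"

text \<open>Owner tags: a bid of a user outside the strategic player, of the i-th user of the
  strategic player, or a fake bid injected by the strategic player (true value 0).\<close>
datatype tag = Other | Member nat | Fake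

type_synonym profile = "(real \<times> tag) list"

definition bids :: "profile \<Rightarrow> real list" where
  "bids P = map fst P"

definition true_val :: "real list \<Rightarrow> tag \<Rightarrow> real" where
  "true_val vs t = (case t of Member i \<Rightarrow> vs ! i | _ \<Rightarrow> 0)"

text \<open>Weak (1-strict) utility of the strategic player whose users have values vs,
  with miner flag m, when the included set is I.\<close>
definition weak_util :: "tfm \<Rightarrow> bool \<Rightarrow> real list \<Rightarrow> profile \<Rightarrow> nat set \<Rightarrow> real" where
  "weak_util M m vs P I =
     (if m then rev_rule M (bids P) I else 0) +
     (\<Sum>j\<in>{j. j < length P \<and> snd (P ! j) \<noteq> Other}.
        (let b = fst (P ! j); v = true_val vs (snd (P ! j)) in
         if conf_rule M (bids P) I j then v - pay_rule M (bids P) I j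
         else if b > v then - (b - v) else 0))"

definition honest_profile :: "real list \<Rightarrow> profile \<Rightarrow> bool" where
  "honest_profile vs P \<longleftrightarrow>
     (\<forall>x\<in>set P. fst x \<ge> 0 \<and> snd x \<noteq> Fake \<and>
        (\<forall>i. snd x = Member i \<longrightarrow> i < length vs \<and> fst x = vs ! i)) \<and>
     (\<forall>i<length vs. card {j. j < length P \<and> snd (P ! j) = Member i} = 1)"

definition dev_profile :: "real list \<Rightarrow> profile \<Rightarrow> bool" where
  "dev_profile vs P \<longleftrightarrow>
     (\<forall>x\<in>set P. fst x \<ge> 0 \<and> (\<forall>i. snd x = Member i \<longrightarrow> i < length vs)) \<and>
     (\<forall>i<length vs. card {j. j < length P \<and> snd (P ! j) = Member i} \<le> 1)"

definition same_others :: "profile \<Rightarrow> profile \<Rightarrow> bool" where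
  "same_others P Q \<longleftrightarrow> map fst (filter (\<lambda>x. snd x = Other) P) = map fst (filter (\<lambda>x. snd x = Other) Q)"

definition no_gain :: "tfm \<Rightarrow> bool \<Rightarrow> real list \<Rightarrow> bool" where
  "no_gain M m vs \<longleftrightarrow>
     (\<forall>P Q I. honest_profile vs P \<and> dev_profile vs Q \<and> same_others P Q \<and>
        (if m then I \<subseteq> {..<length Q} else I = incl_rule M (bids Q)) \<longrightarrow>
        weak_util M m vs Q I \<le> weak_util M m vs P (incl_rule M (bids P)))"

definition weak_UIC :: "tfm \<Rightarrow> bool" where
  "weak_UIC M \<longleftrightarrow> (\<forall>v::real. v \<ge> 0 \<longrightarrow> no_gain M False [v])"

definition weak_MIC :: "tfm \<Rightarrow> bool" where
  "weak_MIC M \<longleftrightarrow> no_gain M True []"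

definition weak_SCP :: "nat \<Rightarrow> tfm \<Rightarrow> bool" where
  "weak_SCP c M \<longleftrightarrow>
     (\<forall>vs. 1 \<le> length vs \<and> length vs \<le> c \<and> (\<forall>v\<in>set vs. v \<ge> 0) \<longrightarrow> no_gain M True vs)"

end

theory Submission
  imports Defs
begin


lemma outr_irrefl: "\<not> outranks bs j j"
  by (auto simp: outranks_def)
lemma outr_total: "j \<noteq> k \<Longrightarrow> outranks bs j k \<or> outranks bs k j"
  by (auto simp: outranks_def)
lemma outr_le: "outranks bs k j \<Longrightarrow> bs!j \<le> bs!k"
  by (auto simp: outranks_def)
lemma outr_trans: "outranks bs a b \<Longrightarrow> outranks bs b c \<Longrightarrow> outranks bs a c"
  by (auto simp: outranks_def)
lemma outr_asym: "outranks bs a b \<Longrightarrow> \<not> outranks bs b a"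
  by (auto simp: outranks_def)

lemma exists_top:
  assumes "finite S" "S \<noteq> {}"
  shows "\<exists>k\<in>S. \<forall>k'\<in>S. \<not> outranks bs k' k"
proof -
  define m where "m = Max ((\<lambda>j. bs!j) ` S)"
  define T where "T = {k\<in>S. bs!k = m}"
  have mS: "m \<in> (\<lambda>j. bs!j) ` S" using assms unfolding m_def by (intro Max_in) auto
  have Tne: "T \<noteq> {}" using mS unfolding T_def by auto
  have fT: "finite T" using assms unfolding T_def by auto
  define k where "k = Min T"
  have kT: "k \<in> T" unfolding k_def using Tne fT by (intro Min_in)
  have "\<forall>k'\<in>S. \<not> outranks bs k' k"
  proof
    fix k' assume k': "k' \<in> S"
    have "bs!k' \<le> m" unfolding m_def using assms k' by (intro Max_ge) auto
    moreover have "bs!k = m" using kT T_def by auto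
    moreover have "bs!k' = m \<Longrightarrow> k \<le> k'" unfolding k_def using fT k' T_def by (intro Min_le) auto
    ultimately show "\<not> outranks bs k' k" by (auto simp: outranks_def)
  qed
  then show ?thesis using kT T_def by auto
qed

lemma card_filter_I:
  assumes "finite I"
  shows "length (filter Pr (sort (map (\<lambda>j. bs!j) (sorted_list_of_set I)))) = card {j\<in>I. Pr (bs!j)}"
proof -
  have "length (filter Pr (sort (map (\<lambda>j. bs!j) (sorted_list_of_set I))))
      = length (filter Pr (map (\<lambda>j. bs!j) (sorted_list_of_set I)))"
    by (simp add: filter_sort)
  also have "\<dots> = length (filter (Pr \<circ> (\<lambda>j. bs!j)) (sorted_list_of_set I))"
    by (simp add: filter_map)
  also have "\<dots> = card ({x. (Pr \<circ> (\<lambda>j. bs!j)) x} \<inter> set (sorted_list_of_set I))"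
    by (simp add: distinct_length_filter)
  also have "\<dots> = card {j\<in>I. Pr (bs!j)}" using assms by (simp add: Int_def conj_commute)
  finally show ?thesis .
qed

lemma sb_props:
  assumes "finite I" "card I \<ge> 2"
  shows "2 \<le> card {j\<in>I. second_bid bs I \<le> bs!j}" and "card {j\<in>I. second_bid bs I < bs!j} \<le> 1"
proof -
  define L where "L = sort (map (\<lambda>j. bs!j) (sorted_list_of_set I))"
  have lenL: "length L = card I" unfolding L_def using assms by simp
  have sL: "sorted L" unfolding L_def by simp
  have s: "second_bid bs I = L ! (card I - 2)"
    unfolding second_bid_def L_def[symmetric] using assms lenL
    by (simp add: rev_nth numeral_2_eq_2 Suc_diff_Suc)
  have "{card I - 2, card I - 1} \<subseteq> {t. t < length L \<and> second_bid bs I \<le> L!t}"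
    using assms lenL s by (auto intro!: sorted_nth_mono[OF sL])
  hence "card {card I - 2, card I - 1} \<le> card {t. t < length L \<and> second_bid bs I \<le> L!t}"
    by (intro card_mono) auto
  moreover have "card {card I - 2, card I - 1} = 2" using assms by auto
  ultimately show "2 \<le> card {j\<in>I. second_bid bs I \<le> bs!j}"
    using card_filter_I[OF assms(1), of "\<lambda>x. second_bid bs I \<le> x" bs] length_filter_conv_card[of _ L]
    unfolding L_def by simp
  have "{t. t < length L \<and> second_bid bs I < L!t} \<subseteq> {card I - 1}"
  proof
    fix t assume t: "t \<in> {t. t < length L \<and> second_bid bs I < L!t}"
    show "t \<in> {card I - 1}"
    proof (rule ccontr)
      assume "t \<notin> {card I - 1}"
      hence "t \<le> card I - 2" using t lenL by auto
      hence "L!t \<le> L!(card I - 2)" using assms lenL by (intro sorted_nth_mono[OF sL]) auto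
      thus False using t s by auto
    qed
  qed
  hence "card {t. t < length L \<and> second_bid bs I < L!t} \<le> card {card I - 1}"
    by (intro card_mono) auto
  hence "card {t. t < length L \<and> second_bid bs I < L!t} \<le> 1" by simp
  thus "card {j\<in>I. second_bid bs I < bs!j} \<le> 1"
    using card_filter_I[OF assms(1), of "\<lambda>x. second_bid bs I < x" bs] length_filter_conv_card[of _ L]
    unfolding L_def by simp
qed

lemma card2_of_two:
  assumes "finite A" "i \<in> A" "k \<in> A" "i \<noteq> k" shows "2 \<le> card A"
proof -
  have "card {i,k} \<le> card A" using assms by (intro card_mono) auto
  thus ?thesis using assms by auto
qed

lemma two_of_card2:
  assumes "2 \<le> card A" shows "\<exists>i\<in>A. \<exists>k\<in>A. i \<noteq> k"
proof -
  have "finite A" using assms by (metis card.infinite not_numeral_le_zero)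
  obtain i where i: "i \<in> A" using assms by fastforce
  have "card (A - {i}) \<ge> 1" using assms i \<open>finite A\<close> by (simp add: card_Diff_singleton)
  hence "A - {i} \<noteq> {}" by (metis card.empty not_one_le_zero)
  then obtain k where "k \<in> A - {i}" by blast
  thus ?thesis using i by auto
qed

lemma sb_ge_min:
  assumes "finite I" "i \<in> I" "k \<in> I" "i \<noteq> k"
  shows "min (bs!i) (bs!k) \<le> second_bid bs I"
proof (rule ccontr)
  assume c: "\<not> ?thesis"
  have c2: "2 \<le> card I" using card2_of_two[OF assms] .
  have "2 \<le> card {j\<in>I. second_bid bs I < bs!j}"
    using c assms by (intro card2_of_two[of _ i k]) auto
  thus False using sb_props(2)[OF assms(1) c2, of bs] by simp
qed

lemma sb_real:
  assumes "finite I" "2 \<le> card I"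
  shows "\<exists>x\<in>I. \<exists>k\<in>I. second_bid bs I = bs!x \<and> outranks bs k x"
proof -
  obtain i k where ik: "i \<in> I" "k \<in> I" "i \<noteq> k" "second_bid bs I \<le> bs!i" "second_bid bs I \<le> bs!k"
    using two_of_card2[OF sb_props(1)[OF assms, of bs]] by auto
  have gt: "\<not> (second_bid bs I < bs!a \<and> second_bid bs I < bs!b)" if "a \<in> I" "b \<in> I" "a \<noteq> b" for a b
  proof
    assume "second_bid bs I < bs!a \<and> second_bid bs I < bs!b"
    hence "2 \<le> card {j\<in>I. second_bid bs I < bs!j}" using that assms
      by (intro card2_of_two[of _ a b]) auto
    thus False using sb_props(2)[OF assms, of bs] by simp
  qed
  show ?thesis
  proof (cases "outranks bs i k")
    case True
    hence "bs!k \<le> bs!i" by (rule outr_le)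
    hence "second_bid bs I = bs!k" using gt[OF ik(1-3)] ik by auto
    thus ?thesis using True ik by auto
  next
    case False
    hence o: "outranks bs k i" using outr_total[OF ik(3)] by auto
    hence "bs!i \<le> bs!k" by (rule outr_le)
    hence "second_bid bs I = bs!i" using gt[OF ik(1-3)] ik by auto
    thus ?thesis using o ik by auto
  qed
qed

lemma sb_small: "\<not> 2 \<le> card I \<Longrightarrow> second_bid bs I = 0"
  by (simp add: second_bid_def)

lemma sb_top:
  assumes "finite I" "j \<in> I" "\<forall>k\<in>I. \<not> outranks bs k j" "\<forall>k\<in>I. 0 \<le> bs!k"
  shows "second_bid bs I \<le> bs!j"
proof (cases "2 \<le> card I")
  case True
  then obtain x k where xk: "x \<in> I" "k \<in> I" "second_bid bs I = bs!x" "outranks bs k x"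
    using sb_real[OF assms(1)] by blast
  have "x \<noteq> j" using xk assms by auto
  hence "outranks bs j x" using outr_total[of x j bs] assms xk by auto
  thus ?thesis using xk outr_le by auto
next
  case False thus ?thesis using sb_small assms by auto
qed

lemma sb_nonneg:
  assumes "finite I" "\<forall>k\<in>I. 0 \<le> bs!k"
  shows "0 \<le> second_bid bs I"
proof (cases "2 \<le> card I")
  case True
  then obtain x k where xk: "x \<in> I" "second_bid bs I = bs!x"
    using sb_real[OF assms(1)] by blast
  thus ?thesis using assms by auto
next
  case False thus ?thesis using sb_small by auto
qed

abbreviation incl :: "real \<Rightarrow> real list \<Rightarrow> nat set" where
  "incl r bs \<equiv> incl_rule (sopp r) bs"

lemma incl_eq: "incl r bs = {j. j < length bs \<and>
     (card {k. k < length bs \<and> outranks bs k j} < 2 \<or> bs ! j \<ge> r)}"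
  by (simp add: sopp_def)

lemma incl_sub: "incl r bs \<subseteq> {..<length bs}"
  by (auto simp: incl_eq)

lemma incl_fin: "finite (incl r bs)"
  using finite_subset[OF incl_sub] by auto

lemma incl_out:
  assumes "j < length bs" "j \<notin> incl r bs"
  shows "\<exists>k1 k2. k1 \<in> incl r bs \<and> k2 \<in> incl r bs \<and> k1 \<noteq> k2 \<and>
           outranks bs k1 j \<and> outranks bs k2 j \<and> bs!j < r"
proof -
  define Os where "Os = {k. k < length bs \<and> outranks bs k j}"
  have c: "2 \<le> card Os" and lt: "bs!j < r" using assms unfolding Os_def incl_eq by auto
  have fO: "finite Os" unfolding Os_def by auto
  have "Os \<noteq> {}" using c by auto
  then obtain k1 where k1: "k1 \<in> Os" "\<forall>k'\<in>Os. \<not> outranks bs k' k1" using exists_top[OF fO] by blast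
  have "card (Os - {k1}) \<ge> 1" using c k1 fO by (simp add: card_Diff_singleton)
  hence "Os - {k1} \<noteq> {}" by (metis card.empty not_one_le_zero)
  then obtain k2 where k2: "k2 \<in> Os - {k1}" "\<forall>k'\<in>Os - {k1}. \<not> outranks bs k' k2"
    using exists_top[of "Os - {k1}"] fO by blast
  have "{k. k < length bs \<and> outranks bs k k1} = {}"
    using k1 unfolding Os_def by (auto dest: outr_trans)
  hence i1: "k1 \<in> incl r bs" using k1 unfolding incl_eq Os_def by (simp del: Collect_empty_eq)
  have "{k. k < length bs \<and> outranks bs k k2} \<subseteq> {k1}"
    using k2 unfolding Os_def by (auto dest: outr_trans)
  hence "card {k. k < length bs \<and> outranks bs k k2} \<le> card {k1}" by (intro card_mono) auto
  hence i2: "k2 \<in> incl r bs" using k2 unfolding incl_eq Os_def by auto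
  show ?thesis using i1 i2 k1 k2 lt unfolding Os_def by blast
qed




definition conf :: "real \<Rightarrow> real list \<Rightarrow> nat set \<Rightarrow> nat \<Rightarrow> bool" where
  "conf r bs I j \<longleftrightarrow> j \<in> I \<and> (r \<le> bs!j \<or> (\<forall>k\<in>I. \<not> outranks bs k j))"

definition KS :: "profile \<Rightarrow> nat set" where
  "KS Q = {j. j < length Q \<and> snd (Q!j) \<noteq> Other}"

definition wv :: "real list \<Rightarrow> profile \<Rightarrow> nat \<Rightarrow> real" where
  "wv vs Q j = true_val vs (snd (Q!j))"

definition gt :: "real \<Rightarrow> real list \<Rightarrow> profile \<Rightarrow> nat set \<Rightarrow> nat \<Rightarrow> real" where
  "gt r vs Q I j = (if conf r (bids Q) I j then wv vs Q j - sopp_price r (bids Q) I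
      else if fst (Q!j) > wv vs Q j then - (fst (Q!j) - wv vs Q j) else 0)"

lemma sel_simps: "pay_rule (sopp r) bs I j = sopp_price r bs I" "rev_rule (sopp r) bs I = sopp_price r bs I"
  "conf_rule (sopp r) bs I j = (j \<in> I \<and> (bs ! j \<ge> r \<or> (\<forall>k\<in>I. \<not> outranks bs k j)))"
  by (simp_all add: sopp_def)

lemma wu: "weak_util (sopp r) m vs Q I =
   (if m then sopp_price r (bids Q) I else 0) + sum (gt r vs Q I) (KS Q)"
  unfolding weak_util_def gt_def KS_def wv_def conf_def sel_simps Let_def
  by simp

lemma fKS: "finite (KS Q)" unfolding KS_def by auto

lemma gt_conf: "conf r (bids Q) I j \<Longrightarrow> gt r vs Q I j = wv vs Q j - sopp_price r (bids Q) I"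
  by (simp add: gt_def)
lemma gt_nconf: "\<not> conf r (bids Q) I j \<Longrightarrow> gt r vs Q I j \<le> 0 \<and> gt r vs Q I j \<le> wv vs Q j - fst (Q!j)"
  by (simp add: gt_def)

lemma bids_nth: "j < length Q \<Longrightarrow> bids Q ! j = fst (Q!j)"
  by (simp add: bids_def)
lemma length_bids[simp]: "length (bids Q) = length Q" by (simp add: bids_def)

lemma price_le: "sopp_price r bs I \<le> r" by (simp add: sopp_price_def)

lemma dev_nonneg: "dev_profile vs Q \<Longrightarrow> k < length Q \<Longrightarrow> 0 \<le> bids Q ! k"
  unfolding dev_profile_def bids_def by (auto simp: nth_mem)
lemma hon_nonneg: "honest_profile vs P \<Longrightarrow> k < length P \<Longrightarrow> 0 \<le> bids P ! k"
  unfolding honest_profile_def bids_def by (auto simp: nth_mem)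

lemma price_nonneg:
  assumes "I \<subseteq> {..<length bs}" "\<forall>k<length bs. 0 \<le> bs!k" "r > 0"
  shows "0 \<le> sopp_price r bs I"
proof -
  have "finite I" using assms finite_subset by auto
  hence "0 \<le> second_bid bs I" using assms by (intro sb_nonneg) auto
  thus ?thesis using assms by (simp add: sopp_price_def)
qed

lemma wv_nonneg:
  assumes "dev_profile vs Q" "\<forall>v\<in>set vs. 0 \<le> v" "j < length Q"
  shows "0 \<le> wv vs Q j"
proof (cases "snd (Q!j)")
  case (Member i)
  hence "i < length vs" using assms unfolding dev_profile_def by (auto simp: nth_mem)
  thus ?thesis using Member assms by (simp add: wv_def true_val_def)
qed (auto simp: wv_def true_val_def)

lemma incl_two:
  assumes "a < length bs" "b < length bs" "a \<noteq> b"
  shows "min (bs!a) (bs!b) \<le> second_bid bs (incl r bs)"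
proof -
  have f: "finite (incl r bs)" by (rule incl_fin)
  show ?thesis
  proof (cases "a \<in> incl r bs")
    case ai: True
    show ?thesis
    proof (cases "b \<in> incl r bs")
      case True thus ?thesis using sb_ge_min[OF f ai True assms(3)] by simp
    next
      case False
      then obtain k1 k2 where "k1 \<in> incl r bs" "k2 \<in> incl r bs" "k1 \<noteq> k2" "outranks bs k1 b" "outranks bs k2 b"
        using incl_out[OF assms(2)] by blast
      thus ?thesis using sb_ge_min[OF f, of k1 k2 bs] outr_le[of bs k1 b] outr_le[of bs k2 b] by linarith
    qed
  next
    case False
    then obtain k1 k2 where "k1 \<in> incl r bs" "k2 \<in> incl r bs" "k1 \<noteq> k2" "outranks bs k1 a" "outranks bs k2 a"
      using incl_out[OF assms(1)] by blast
    thus ?thesis using sb_ge_min[OF f, of k1 k2 bs] outr_le[of bs k1 a] outr_le[of bs k2 a] by linarith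
  qed
qed

lemma others_card:
  assumes "same_others P Q"
  shows "card {j. j < length P \<and> snd (P!j) = Other \<and> Pr (fst (P!j))}
       = card {j. j < length Q \<and> snd (Q!j) = Other \<and> Pr (fst (Q!j))}"
proof -
  have e: "card {j. j < length X \<and> snd (X!j) = Other \<and> Pr (fst (X!j))}
        = length (filter Pr (map fst (filter (\<lambda>x. snd x = Other) X)))" for X :: profile
    by (simp add: filter_map filter_filter length_filter_conv_card comp_def conj_commute)
  show ?thesis using assms unfolding e same_others_def by simp
qed

lemma incl_lt: "j \<in> incl r bs \<Longrightarrow> j < length bs"
  using incl_sub[of r bs] by auto




lemma card1_eq: "card A = 1 \<Longrightarrow> a \<in> A \<Longrightarrow> b \<in> A \<Longrightarrow> a = b"
  by (metis card_1_singletonE singletonD)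

locale hon =
  fixes r :: real and vs :: "real list" and P :: profile
  assumes r: "r > 0" and vsn: "\<forall>v\<in>set vs. 0 \<le> v" and hP: "honest_profile vs P"
begin

abbreviation "bp \<equiv> bids P"
abbreviation "Ih \<equiv> incl r (bids P)"
abbreviation "ph \<equiv> sopp_price r (bids P) (incl r (bids P))"

lemma HP0:
  assumes "j \<in> KS P"
  shows "\<exists>i. snd (P!j) = Member i \<and> i < length vs \<and> fst (P!j) = vs!i \<and> wv vs P j = fst (P!j)"
proof -
  have jl: "j < length P" "snd (P!j) \<noteq> Other" using assms by (auto simp: KS_def)
  have m: "P!j \<in> set P" using jl by auto
  have "snd (P!j) \<noteq> Fake" using hP m unfolding honest_profile_def by auto
  then obtain i where i: "snd (P!j) = Member i" using jl by (cases "snd (P!j)") auto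
  have "i < length vs \<and> fst (P!j) = vs!i" using hP m i unfolding honest_profile_def by auto
  thus ?thesis using i by (auto simp: wv_def true_val_def)
qed

lemma bpn: "k < length P \<Longrightarrow> 0 \<le> bp!k" using hon_nonneg[OF hP] .

lemma fIh: "finite Ih" by (rule incl_fin)

lemma ph_nonneg: "0 \<le> ph"
  using price_nonneg[OF incl_sub _ r] bpn by simp

lemma conf_ge:
  assumes "conf r bp Ih j"
  shows "ph \<le> bp!j"
proof -
  have jI: "j \<in> Ih" "j < length P" using assms incl_lt[of j r bp] unfolding conf_def by auto
  show ?thesis
  proof (cases "r \<le> bp!j")
    case True thus ?thesis using price_le[of r bp Ih] by linarith
  next
    case False
    hence "\<forall>k\<in>Ih. \<not> outranks bp k j" using assms unfolding conf_def by auto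
    moreover have "\<forall>k\<in>Ih. 0 \<le> bp!k" using incl_lt bpn by fastforce
    ultimately have "second_bid bp Ih \<le> bp!j" using sb_top[OF fIh jI(1)] by auto
    thus ?thesis by (simp add: sopp_price_def)
  qed
qed

lemma HP1:
  assumes "j \<in> KS P"
  shows "0 \<le> gt r vs P Ih j"
proof -
  obtain i where i: "wv vs P j = fst (P!j)" using HP0[OF assms] by blast
  have jl: "j < length P" using assms by (auto simp: KS_def)
  show ?thesis
  proof (cases "conf r bp Ih j")
    case True thus ?thesis using conf_ge[OF True] i bids_nth[OF jl] gt_conf[OF True] by simp
  next
    case False thus ?thesis using i by (simp add: gt_def)
  qed
qed

lemma sum_ge0: "0 \<le> sum (gt r vs P Ih) (KS P)"
  using HP1 by (intro sum_nonneg) auto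

lemma sum_ge: "j \<in> KS P \<Longrightarrow> gt r vs P Ih j \<le> sum (gt r vs P Ih) (KS P)"
  using HP1 fKS by (intro member_le_sum) auto

abbreviation "H \<equiv> weak_util (sopp r) True vs P Ih"

lemma H_eq: "H = ph + sum (gt r vs P Ih) (KS P)" by (simp add: wu)

lemma H1: "0 \<le> H" using H_eq ph_nonneg sum_ge0 by simp

lemma H_ph: "ph \<le> H" using H_eq sum_ge0 by simp

lemma pos_exists:
  assumes "i < length vs"
  shows "\<exists>u<length P. snd (P!u) = Member i"
proof -
  have "card {j. j < length P \<and> snd (P!j) = Member i} = 1" using hP assms unfolding honest_profile_def by auto
  then obtain u where "u \<in> {j. j < length P \<and> snd (P!j) = Member i}" by (metis card_1_singletonE insertI1)
  thus ?thesis by auto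
qed

lemma H3:
  assumes "a < length P" "b < length P" "a \<noteq> b" "x \<le> bp!a" "x \<le> bp!b"
  shows "min x r \<le> ph"
  using incl_two[of a bp b r] assms by (simp add: sopp_price_def)

lemma H2:
  assumes "i < length vs"
  shows "vs!i \<le> H"
proof -
  obtain u where u: "u < length P" "snd (P!u) = Member i" using pos_exists[OF assms] by blast
  have uK: "u \<in> KS P" using u by (auto simp: KS_def)
  have bu: "bp!u = vs!i" "wv vs P u = vs!i" using HP0[OF uK] u bids_nth[OF u(1)] by auto
  show ?thesis
  proof (cases "conf r bp Ih u")
    case True
    hence "gt r vs P Ih u = vs!i - ph" using gt_conf bu by simp
    thus ?thesis using sum_ge[OF uK] H_eq by simp
  next
    case False
    have lt: "bp!u < r"
    proof (rule ccontr)
      assume "\<not> bp!u < r"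
      hence "u \<in> Ih" using u by (auto simp: incl_eq)
      thus False using False \<open>\<not> bp!u < r\<close> by (auto simp: conf_def)
    qed
    have "bp!u \<le> second_bid bp Ih"
    proof (cases "u \<in> Ih")
      case True
      then obtain k where k: "k \<in> Ih" "outranks bp k u" using False lt by (auto simp: conf_def)
      have "k \<noteq> u" using k outr_irrefl by metis
      thus ?thesis using sb_ge_min[OF fIh True k(1), of bp] outr_le[OF k(2)] by auto
    next
      case False
      then obtain k1 k2 where "k1 \<in> Ih" "k2 \<in> Ih" "k1 \<noteq> k2" "outranks bp k1 u" "outranks bp k2 u"
        using incl_out[of u bp r] u by auto
      thus ?thesis using sb_ge_min[OF fIh, of k1 k2 bp] outr_le[of bp k1 u] outr_le[of bp k2 u] by linarith
    qed
    hence "vs!i \<le> ph" using lt bu by (simp add: sopp_price_def)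
    thus ?thesis using H_ph by linarith
  qed
qed

definition idx :: "profile \<Rightarrow> nat \<Rightarrow> nat" where
  "idx X j = (case snd (X!j) of Member i \<Rightarrow> i | _ \<Rightarrow> 0)"

lemma bijP: "bij_betw (idx P) (KS P) {..<length vs}"
proof (rule bij_betw_imageI)
  show "inj_on (idx P) (KS P)"
  proof (rule inj_onI)
    fix a b assume ab: "a \<in> KS P" "b \<in> KS P" "idx P a = idx P b"
    obtain i where i: "snd (P!a) = Member i" "i < length vs" using HP0[OF ab(1)] by blast
    obtain i' where i': "snd (P!b) = Member i'" using HP0[OF ab(2)] by blast
    have ii: "i' = i" using ab(3) i i' by (simp add: idx_def)
    have "card {j. j < length P \<and> snd (P!j) = Member i} = 1" using hP i unfolding honest_profile_def by auto
    moreover have "a \<in> {j. j < length P \<and> snd (P!j) = Member i}" "b \<in> {j. j < length P \<and> snd (P!j) = Member i}"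
      using ab i i' ii by (auto simp: KS_def)
    ultimately show "a = b" by (rule card1_eq)
  qed
  show "idx P ` KS P = {..<length vs}"
  proof
    show "idx P ` KS P \<subseteq> {..<length vs}"
    proof
      fix y assume "y \<in> idx P ` KS P"
      then obtain j where j: "j \<in> KS P" "y = idx P j" by blast
      obtain i where "snd (P!j) = Member i" "i < length vs" using HP0[OF j(1)] by blast
      thus "y \<in> {..<length vs}" using j(2) by (simp add: idx_def)
    qed
    show "{..<length vs} \<subseteq> idx P ` KS P"
    proof
      fix i assume "i \<in> {..<length vs}"
      then obtain u where u: "u < length P" "snd (P!u) = Member i" using pos_exists by blast
      hence "u \<in> KS P" "idx P u = i" by (auto simp: KS_def idx_def)
      thus "i \<in> idx P ` KS P" by blast
    qed
  qed
qed

lemma wv_idx: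
  assumes "j \<in> KS P" shows "wv vs P j = vs ! idx P j"
proof -
  obtain i where "snd (P!j) = Member i" "fst (P!j) = vs!i" "wv vs P j = fst (P!j)" using HP0[OF assms] by blast
  thus ?thesis by (simp add: idx_def)
qed

abbreviation "M \<equiv> (\<Sum>i<length vs. max 0 (vs!i - r))"

lemma H4:
  assumes "a < length P" "b < length P" "a \<noteq> b" "r \<le> bp!a" "r \<le> bp!b"
  shows "r + M \<le> H"
proof -
  have pr: "ph = r" using H3[OF assms] price_le[of r bp Ih] by simp
  have t: "max 0 (wv vs P j - r) \<le> gt r vs P Ih j" if j: "j \<in> KS P" for j
  proof -
    have jl: "j < length P" using j by (auto simp: KS_def)
    have w: "wv vs P j = bp!j" using HP0[OF j] bids_nth[OF jl] by auto
    show ?thesis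
    proof (cases "conf r bp Ih j")
      case True
      thus ?thesis using gt_conf[OF True] conf_ge[OF True] pr w by simp
    next
      case False
      have "bp!j < r"
      proof (rule ccontr)
        assume "\<not> bp!j < r"
        hence "j \<in> Ih" using jl by (auto simp: incl_eq)
        thus False using False \<open>\<not> bp!j < r\<close> by (auto simp: conf_def)
      qed
      thus ?thesis using False w by (simp add: gt_def bids_nth[OF jl])
    qed
  qed
  have "M = (\<Sum>j\<in>KS P. max 0 (vs ! idx P j - r))"
    using sum.reindex_bij_betw[OF bijP, of "\<lambda>i. max 0 (vs!i - r)"] by simp
  also have "\<dots> = (\<Sum>j\<in>KS P. max 0 (wv vs P j - r))" using wv_idx by simp
  also have "\<dots> \<le> sum (gt r vs P Ih) (KS P)" using t by (intro sum_mono) auto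
  finally show ?thesis using H_eq pr by simp
qed

end




lemma card_le1_eq: "finite A \<Longrightarrow> card A \<le> 1 \<Longrightarrow> a \<in> A \<Longrightarrow> b \<in> A \<Longrightarrow> a = b"
  using card_le_Suc0_iff_eq by (metis One_nat_def)

lemma other_QP:
  assumes so: "same_others P Q" and ab: "a < length Q" "b < length Q" "a \<noteq> b"
    "snd (Q!a) = Other" "snd (Q!b) = Other" "x \<le> fst (Q!a)" "x \<le> fst (Q!b)"
  shows "\<exists>a'<length P. \<exists>b'<length P. a' \<noteq> b' \<and> x \<le> fst (P!a') \<and> x \<le> fst (P!b')"
proof -
  have "2 \<le> card {j. j < length Q \<and> snd (Q!j) = Other \<and> x \<le> fst (Q!j)}"
    using ab by (intro card2_of_two[of _ a b]) auto
  hence "2 \<le> card {j. j < length P \<and> snd (P!j) = Other \<and> x \<le> fst (P!j)}"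
    using others_card[OF so, of "\<lambda>y. x \<le> y"] by simp
  from two_of_card2[OF this] show ?thesis by blast
qed

lemma other_PQ:
  assumes so: "same_others P Q" and a: "a < length P" "snd (P!a) = Other" "x \<le> fst (P!a)"
  shows "\<exists>c<length Q. snd (Q!c) = Other \<and> x \<le> fst (Q!c)"
proof -
  have "1 \<le> card {j. j < length P \<and> snd (P!j) = Other \<and> x \<le> fst (P!j)}"
  proof -
    have "card {a} \<le> card {j. j < length P \<and> snd (P!j) = Other \<and> x \<le> fst (P!j)}"
      using a by (intro card_mono) auto
    thus ?thesis by simp
  qed
  hence "1 \<le> card {j. j < length Q \<and> snd (Q!j) = Other \<and> x \<le> fst (Q!j)}"
    using others_card[OF so, of "\<lambda>y. x \<le> y"] by simp
  hence "{j. j < length Q \<and> snd (Q!j) = Other \<and> x \<le> fst (Q!j)} \<noteq> {}"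
    by (metis card.empty not_one_le_zero)
  thus ?thesis by blast
qed

lemma sum_le_one:
  assumes "finite K" "j \<in> K" "\<forall>k\<in>K - {j}. f k \<le> (0::real)"
  shows "sum f K \<le> f j"
proof -
  have "sum f K = f j + sum f (K - {j})" using assms by (simp add: sum.remove)
  moreover have "sum f (K - {j}) \<le> 0" using assms by (intro sum_nonpos) auto
  ultimately show ?thesis by simp
qed

lemma conf_unique_low:
  assumes fI: "finite I" and s: "second_bid bs I < r" and c: "conf r bs I j"
  shows "\<forall>k\<in>I. \<not> outranks bs k j"
proof
  fix k assume k: "k \<in> I"
  show "\<not> outranks bs k j"
  proof
    assume o: "outranks bs k j"
    have jI: "j \<in> I" using c by (simp add: conf_def)
    have kj: "k \<noteq> j" using o outr_irrefl by metis
    have "r \<le> bs!j" using c o k by (auto simp: conf_def)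
    moreover have "bs!j \<le> bs!k" using outr_le[OF o] .
    moreover have "min (bs!k) (bs!j) \<le> second_bid bs I" using sb_ge_min[OF fI k jI kj] .
    ultimately show False using s by linarith
  qed
qed

lemma conf_unique:
  assumes fI: "finite I" and s: "second_bid bs I < r" and c: "conf r bs I j" "conf r bs I j'"
  shows "j = j'"
proof (rule ccontr)
  assume "j \<noteq> j'"
  hence "outranks bs j j' \<or> outranks bs j' j" by (rule outr_total)
  moreover have "j \<in> I" "j' \<in> I" using c by (auto simp: conf_def)
  ultimately show False using conf_unique_low[OF fI s c(1)] conf_unique_low[OF fI s c(2)] by blast
qed

context hon begin

lemma Hw:
  assumes dQ: "dev_profile vs Q" and j: "j < length Q"
  shows "wv vs Q j \<le> H"
proof (cases "snd (Q!j)")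
  case (Member i)
  hence "i < length vs" using dQ j unfolding dev_profile_def by (auto simp: nth_mem)
  thus ?thesis using Member H2 by (simp add: wv_def true_val_def)
qed (auto simp: wv_def true_val_def H1)

lemma devM:
  assumes dQ: "dev_profile vs Q"
  shows "(\<Sum>j\<in>KS Q. max 0 (wv vs Q j - r)) \<le> M"
proof -
  define Km where "Km = {j\<in>KS Q. \<exists>i. snd (Q!j) = Member i}"
  have fK: "finite (KS Q)" by (rule fKS)
  have sub: "Km \<subseteq> KS Q" unfolding Km_def by auto
  have z: "max 0 (wv vs Q j - r) = 0" if "j \<in> KS Q - Km" for j
  proof -
    have "snd (Q!j) = Fake" using that unfolding Km_def KS_def by (cases "snd (Q!j)") auto
    thus ?thesis using r by (simp add: wv_def true_val_def)
  qed
  have "(\<Sum>j\<in>KS Q. max 0 (wv vs Q j - r)) = (\<Sum>j\<in>Km. max 0 (wv vs Q j - r))"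
    using sum.subset_diff[OF sub fK, of "\<lambda>j. max 0 (wv vs Q j - r)"] z by simp
  also have "\<dots> = (\<Sum>j\<in>Km. max 0 (vs ! idx Q j - r))"
    by (intro sum.cong) (auto simp: Km_def wv_def true_val_def idx_def)
  also have "\<dots> = (\<Sum>i\<in>idx Q ` Km. max 0 (vs ! i - r))"
  proof -
    have "inj_on (idx Q) Km"
    proof (rule inj_onI)
      fix a b assume ab: "a \<in> Km" "b \<in> Km" "idx Q a = idx Q b"
      obtain i where i: "snd (Q!a) = Member i" using ab unfolding Km_def by auto
      obtain i' where i': "snd (Q!b) = Member i'" using ab unfolding Km_def by auto
      have ii: "i' = i" using ab(3) i i' by (simp add: idx_def)
      have a: "a < length Q" "b < length Q" using ab unfolding Km_def KS_def by auto
      have "i < length vs" using dQ a i unfolding dev_profile_def by (auto simp: nth_mem)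
      hence "card {j. j < length Q \<and> snd (Q!j) = Member i} \<le> 1" using dQ unfolding dev_profile_def by auto
      thus "a = b" using a i i' ii by (intro card_le1_eq) auto
    qed
    thus ?thesis by (simp add: sum.reindex)
  qed
  also have "\<dots> \<le> M"
  proof (rule sum_mono2)
    show "idx Q ` Km \<subseteq> {..<length vs}"
    proof
      fix y assume "y \<in> idx Q ` Km"
      then obtain j i where j: "j \<in> Km" "y = idx Q j" "snd (Q!j) = Member i" unfolding Km_def by auto
      have "j < length Q" using j unfolding Km_def KS_def by auto
      hence "i < length vs" using dQ j unfolding dev_profile_def by (auto simp: nth_mem)
      thus "y \<in> {..<length vs}" using j by (simp add: idx_def)
    qed
  qed auto
  finally show ?thesis .
qed

end




context hon begin

lemma scp_dev:
  assumes dQ: "dev_profile vs Q" and so: "same_others P Q" and IQ: "I \<subseteq> {..<length Q}"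
  shows "weak_util (sopp r) True vs Q I \<le> H"
proof -
  define bq where "bq = bids Q"
  define s where "s = second_bid bq I"
  define p where "p = sopp_price r bq I"
  define g where "g = gt r vs Q I"
  define K where "K = KS Q"
  have fI: "finite I" using IQ finite_subset by auto
  have fK: "finite K" unfolding K_def by (rule fKS)
  have Iq: "j \<in> I \<Longrightarrow> j < length Q" for j using IQ by auto
  have bqn: "k < length Q \<Longrightarrow> 0 \<le> bq!k" for k using dev_nonneg[OF dQ] unfolding bq_def .
  have bqf: "k < length Q \<Longrightarrow> bq!k = fst (Q!k)" for k unfolding bq_def by (rule bids_nth)
  have U: "weak_util (sopp r) True vs Q I = p + sum g K"
    unfolding p_def g_def K_def bq_def by (simp add: wu)
  have pe: "p = min s r" unfolding p_def s_def by (simp add: sopp_price_def)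
  have HwQ: "j < length Q \<Longrightarrow> wv vs Q j \<le> H" for j using Hw[OF dQ] .
  have wn: "j < length Q \<Longrightarrow> 0 \<le> wv vs Q j" for j using wv_nonneg[OF dQ vsn] .
  have KO: "j < length Q \<Longrightarrow> j \<notin> K \<Longrightarrow> snd (Q!j) = Other" for j unfolding K_def KS_def by auto
  have Kl: "j \<in> K \<Longrightarrow> j < length Q" for j unfolding K_def KS_def by auto
  have gc: "conf r bq I j \<Longrightarrow> g j = wv vs Q j - p" for j unfolding g_def p_def bq_def by (rule gt_conf)
  have gn: "\<not> conf r bq I j \<Longrightarrow> g j \<le> 0 \<and> g j \<le> wv vs Q j - fst (Q!j)" for j
    unfolding g_def bq_def by (rule gt_nconf)
  show ?thesis
  proof (cases "r \<le> s")
    case sr: True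
    have pr: "p = r" using pe sr by simp
    have gh: "g j \<le> max 0 (wv vs Q j - r)" if "j \<in> K" for j
      using gc[of j] gn[of j] pr by (cases "conf r bq I j") auto
    have SM: "(\<Sum>j\<in>K. max 0 (wv vs Q j - r)) \<le> M" unfolding K_def by (rule devM[OF dQ])
    show ?thesis
    proof (cases "\<exists>a<length P. \<exists>b<length P. a \<noteq> b \<and> r \<le> bp!a \<and> r \<le> bp!b")
      case True
      then obtain a b where ab: "a < length P" "b < length P" "a \<noteq> b" "r \<le> bp!a" "r \<le> bp!b" by blast
      have "sum g K \<le> (\<Sum>j\<in>K. max 0 (wv vs Q j - r))" using gh by (intro sum_mono) auto
      thus ?thesis using U pr SM H4[OF ab] by simp
    next
      case noA: False
      have c2: "2 \<le> card I"
      proof (rule ccontr)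
        assume "\<not> 2 \<le> card I"
        hence "s = 0" unfolding s_def by (rule sb_small)
        thus False using sr r by simp
      qed
      obtain x k where xk: "x \<in> I" "k \<in> I" "s = bq!x" "outranks bq k x"
        using sb_real[OF fI c2] unfolding s_def by blast
      have xk2: "x \<noteq> k" using xk(4) outr_irrefl by metis
      have bx: "r \<le> bq!x" "r \<le> bq!k" using sr xk outr_le[OF xk(4)] by auto
      have "\<exists>b0\<in>{x,k}. b0 \<in> K"
      proof (rule ccontr)
        assume "\<not> ?thesis"
        hence Ox: "snd (Q!x) = Other" "snd (Q!k) = Other" using KO Iq xk by auto
        have fx: "r \<le> fst (Q!x)" "r \<le> fst (Q!k)" using bx bqf[OF Iq[OF xk(1)]] bqf[OF Iq[OF xk(2)]] by auto
        obtain a' b' where ab: "a' < length P" "b' < length P" "a' \<noteq> b'" "r \<le> fst (P!a')" "r \<le> fst (P!b')"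
          using other_QP[OF so Iq[OF xk(1)] Iq[OF xk(2)] xk2 Ox fx] by blast
        have "bp!a' = fst (P!a')" "bp!b' = fst (P!b')" using bids_nth ab by auto
        hence "r \<le> bp!a'" "r \<le> bp!b'" using ab by auto
        thus False using noA ab(1-3) by blast
      qed
      then obtain b0 where b0: "b0 \<in> K" "b0 \<in> I" "r \<le> bq!b0" using xk bx by auto
      have cb: "conf r bq I b0" using b0 by (simp add: conf_def)
      define h where "h = (\<lambda>j. max 0 (wv vs Q j - r))"
      have "sum g K = g b0 + sum g (K - {b0})" using fK b0 by (simp add: sum.remove)
      also have "\<dots> \<le> (wv vs Q b0 - r) + sum h (K - {b0})"
        using gc[OF cb] pr gh unfolding h_def by (auto intro!: sum_mono)
      also have "sum h (K - {b0}) = sum h K - h b0" using fK b0 by (simp add: sum.remove)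
      finally have U1: "sum g K \<le> wv vs Q b0 - r + sum h K - h b0" by simp
      have hK: "0 \<le> sum h K" "sum h K \<le> M" using SM unfolding h_def by (auto intro!: sum_nonneg)
      have mn: "wv vs Q b0 - h b0 \<le> min (wv vs Q b0) r" unfolding h_def by auto
      have Hb: "wv vs Q b0 \<le> H" using HwQ Kl b0 by auto
      show ?thesis
      proof (cases "M = 0")
        case True
        thus ?thesis using U pr U1 hK mn Hb by linarith
      next
        case False
        have "\<exists>i<length vs. 0 < max 0 (vs!i - r)"
        proof (rule ccontr)
          assume "\<not> ?thesis"
          hence "\<forall>i\<in>{..<length vs}. max 0 (vs!i - r) = 0" by (auto simp: max_def)
          hence "M = 0" by simp
          thus False using False by simp
        qed
        then obtain i where i: "i < length vs" "r < vs!i" by (auto simp: max_def split: if_splits)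
        have others: "max 0 (vs!i' - r) = 0" if ii: "i' \<in> {..<length vs} - {i}" for i'
        proof (rule ccontr)
          assume "max 0 (vs!i' - r) \<noteq> 0"
          hence ri: "r < vs!i'" by (auto simp: max_def split: if_splits)
          obtain u where u: "u < length P" "snd (P!u) = Member i" using pos_exists[OF i(1)] by blast
          obtain u' where u': "u' < length P" "snd (P!u') = Member i'" using pos_exists[of i'] ii by blast
          have uK: "u \<in> KS P" "u' \<in> KS P" using u u' by (auto simp: KS_def)
          have "fst (P!u) = vs!i" "fst (P!u') = vs!i'" using HP0[OF uK(1)] HP0[OF uK(2)] u u' by auto
          moreover have "u \<noteq> u'" using u u' ii by auto
          moreover have "bp!u = fst (P!u)" "bp!u' = fst (P!u')" using bids_nth u u' by auto
          ultimately have "r \<le> bp!u" "r \<le> bp!u'" "u \<noteq> u'" using i ri by auto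
          thus False using noA u(1) u'(1) by blast
        qed
        have "M = max 0 (vs!i - r) + (\<Sum>i'\<in>{..<length vs} - {i}. max 0 (vs!i' - r))"
          using i by (simp add: sum.remove)
        also have "\<dots> = vs!i - r" using others i by simp
        finally have "M = vs!i - r" .
        moreover have "vs!i \<le> H" using H2[OF i(1)] .
        ultimately show ?thesis using U pr U1 hK mn by linarith
      qed
    qed
  next
    case sr: False
    have pe2: "p = s" using pe sr by simp
    have sl: "second_bid bq I < r" using sr unfolding s_def by simp
    show ?thesis
    proof (cases "\<exists>j\<in>K. conf r bq I j")
      case True
      then obtain j where j: "j \<in> K" "conf r bq I j" by blast
      have "\<forall>k\<in>K - {j}. g k \<le> 0"
      proof
        fix k assume k: "k \<in> K - {j}"
        hence "\<not> conf r bq I k" using conf_unique[OF fI sl j(2)] by auto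
        thus "g k \<le> 0" using gn by auto
      qed
      hence "sum g K \<le> g j" using sum_le_one[OF fK j(1)] by blast
      thus ?thesis using U gc[OF j(2)] HwQ[OF Kl[OF j(1)]] by linarith
    next
      case noC: False
      have gK: "\<forall>j\<in>K. g j \<le> 0 \<and> g j \<le> wv vs Q j - fst (Q!j)" using gn noC by auto
      have one: "j \<in> K \<Longrightarrow> sum g K \<le> g j" for j using gK by (intro sum_le_one[OF fK]) auto
      have s0: "sum g K \<le> 0" using gK by (intro sum_nonpos) auto
      show ?thesis
      proof (cases "2 \<le> card I")
        case False
        hence "s = 0" unfolding s_def by (rule sb_small)
        thus ?thesis using U pe2 s0 H1 by linarith
      next
        case c2: True
        obtain x k where xk: "x \<in> I" "k \<in> I" "s = bq!x" "outranks bq k x"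
          using sb_real[OF fI c2] unfolding s_def by blast
        have xk2: "x \<noteq> k" using xk(4) outr_irrefl by metis
        have bk: "bq!x \<le> bq!k" using outr_le[OF xk(4)] .
        show ?thesis
        proof (cases "x \<in> K")
          case True
          have "sum g K \<le> wv vs Q x - fst (Q!x)" using one[OF True] gK True by fastforce
          thus ?thesis using U pe2 xk bqf[OF Iq[OF xk(1)]] HwQ[OF Iq[OF xk(1)]] by linarith
        next
          case xO: False
          show ?thesis
          proof (cases "k \<in> K")
            case True
            have "sum g K \<le> wv vs Q k - fst (Q!k)" using one[OF True] gK True by fastforce
            thus ?thesis using U pe2 xk bk bqf[OF Iq[OF xk(2)]] HwQ[OF Iq[OF xk(2)]] by linarith
          next
            case False
            have "snd (Q!x) = Other" "snd (Q!k) = Other" using KO Iq xk xO False by auto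
            note Ox = this
            have fx: "s \<le> fst (Q!x)" "s \<le> fst (Q!k)" using bk xk bqf[OF Iq[OF xk(1)]] bqf[OF Iq[OF xk(2)]] by auto
            obtain a' b' where ab: "a' < length P" "b' < length P" "a' \<noteq> b'" "s \<le> fst (P!a')" "s \<le> fst (P!b')"
              using other_QP[OF so Iq[OF xk(1)] Iq[OF xk(2)] xk2 Ox fx] by blast
            have "bp!a' = fst (P!a')" "bp!b' = fst (P!b')" using bids_nth ab by auto
            hence "min s r \<le> ph" using H3[of a' b' s] ab by auto
            thus ?thesis using U pe s0 H_ph by linarith
          qed
        qed
      qed
    qed
  qed
qed

end



context hon begin

lemma uic_dev:
  assumes lv: "vs = [v]" and dQ: "dev_profile vs Q" and so: "same_others P Q"
  shows "weak_util (sopp r) False vs Q (incl r (bids Q)) \<le> weak_util (sopp r) False vs P Ih"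
proof -
  define bq where "bq = bids Q"
  define I where "I = incl r bq"
  define s where "s = second_bid bq I"
  define p where "p = sopp_price r bq I"
  define g where "g = gt r vs Q I"
  define K where "K = KS Q"
  have fI: "finite I" unfolding I_def by (rule incl_fin)
  have fK: "finite K" unfolding K_def by (rule fKS)
  have Iq: "j \<in> I \<Longrightarrow> j < length Q" for j unfolding I_def bq_def using incl_lt by fastforce
  have bqn: "k < length Q \<Longrightarrow> 0 \<le> bq!k" for k using dev_nonneg[OF dQ] unfolding bq_def .
  have bqf: "k < length Q \<Longrightarrow> bq!k = fst (Q!k)" for k unfolding bq_def by (rule bids_nth)
  have U: "weak_util (sopp r) False vs Q (incl r (bids Q)) = sum g K"
    unfolding g_def K_def I_def bq_def by (simp add: wu)
  have HF: "weak_util (sopp r) False vs P Ih = sum (gt r vs P Ih) (KS P)" by (simp add: wu)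
  have pe: "p = min s r" unfolding p_def s_def by (simp add: sopp_price_def)
  have p0: "0 \<le> p" unfolding p_def I_def bq_def
    using price_nonneg[OF incl_sub _ r] dev_nonneg[OF dQ] by simp
  have Kl: "j \<in> K \<Longrightarrow> j < length Q" for j unfolding K_def KS_def by auto
  have KO: "j \<in> K \<Longrightarrow> snd (Q!j) \<noteq> Other" for j unfolding K_def KS_def by auto
  have gc: "conf r bq I j \<Longrightarrow> g j = wv vs Q j - p" for j unfolding g_def p_def bq_def by (rule gt_conf)
  have gn: "\<not> conf r bq I j \<Longrightarrow> g j \<le> 0" for j
    unfolding g_def bq_def using gt_nconf by blast
  define C where "C = {j\<in>K. snd (Q!j) = Member 0 \<and> conf r bq I j}"
  have gb: "g j \<le> (if snd (Q!j) = Member 0 \<and> conf r bq I j then v - p else 0)" if j: "j \<in> K" for j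
  proof (cases "snd (Q!j)")
    case Other thus ?thesis using KO j by simp
  next
    case (Member i)
    hence "i < length vs" using dQ Kl[OF j] unfolding dev_profile_def by (auto simp: nth_mem)
    hence i0: "i = 0" using lv by simp
    hence w: "wv vs Q j = v" using Member lv by (simp add: wv_def true_val_def)
    show ?thesis
    proof (cases "conf r bq I j")
      case True thus ?thesis using gc[OF True] w Member i0 by simp
    next
      case False thus ?thesis using gn[OF False] by simp
    qed
  next
    case Fake
    hence w: "wv vs Q j = 0" by (simp add: wv_def true_val_def)
    show ?thesis
    proof (cases "conf r bq I j")
      case True thus ?thesis using gc[OF True] w Fake p0 by simp
    next
      case False thus ?thesis using gn[OF False] by simp
    qed
  qed
  have "sum g K \<le> (\<Sum>j\<in>K. if snd (Q!j) = Member 0 \<and> conf r bq I j then v - p else 0)"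
    using gb by (intro sum_mono) auto
  also have "\<dots> = (\<Sum>j\<in>C. v - p)" unfolding C_def by (rule sum.inter_filter[OF fK, symmetric])
  also have "\<dots> = real (card C) * (v - p)" by simp
  finally have UC: "sum g K \<le> real (card C) * (v - p)" .
  have cC: "card C \<le> 1"
  proof -
    have "C \<subseteq> {j. j < length Q \<and> snd (Q!j) = Member 0}" unfolding C_def using Kl by auto
    hence "card C \<le> card {j. j < length Q \<and> snd (Q!j) = Member 0}" by (intro card_mono) auto
    moreover have "card {j. j < length Q \<and> snd (Q!j) = Member 0} \<le> 1"
      using dQ lv unfolding dev_profile_def by auto
    ultimately show ?thesis by simp
  qed
  have HF0: "0 \<le> weak_util (sopp r) False vs P Ih" using HF sum_ge0 by simp
  show ?thesis
  proof (cases "v - p \<le> 0 \<or> C = {}")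
    case True
    hence "real (card C) * (v - p) \<le> 0" by (auto simp: mult_nonneg_nonpos)
    thus ?thesis using U UC HF0 by linarith
  next
    case False
    then obtain u where uC: "u \<in> C" and vp: "0 < v - p" by auto
    have "real (card C) * (v - p) \<le> v - p" using cC vp by (simp add: mult_le_cancel_right1)
    hence Uv: "weak_util (sopp r) False vs Q (incl r (bids Q)) \<le> v - p" using U UC by linarith
    have cu: "conf r bq I u" and uM: "snd (Q!u) = Member 0" and uI: "u \<in> I" using uC unfolding C_def conf_def by auto
    have KC: "min (bq!c) r \<le> p" if c: "c < length Q" "snd (Q!c) = Other" for c
    proof -
      have cu': "c \<noteq> u" using c uM by auto
      show ?thesis
      proof (cases "c \<in> I")
        case True
        have m: "min (bq!u) (bq!c) \<le> s" unfolding s_def using sb_ge_min[OF fI uI True] cu' by auto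
        show ?thesis
        proof (cases "bq!c \<le> bq!u")
          case True thus ?thesis using m pe by auto
        next
          case False
          hence "outranks bq c u" by (simp add: outranks_def)
          hence "r \<le> bq!u" using cu \<open>c \<in> I\<close> by (auto simp: conf_def)
          thus ?thesis using m pe False by auto
        qed
      next
        case False
        then obtain k1 k2 where "k1 \<in> I" "k2 \<in> I" "k1 \<noteq> k2" "outranks bq k1 c" "outranks bq k2 c"
          using incl_out[of c bq r] c unfolding I_def bq_def by auto
        hence "bq!c \<le> s" unfolding s_def
          using sb_ge_min[OF fI, of k1 k2 bq] outr_le[of bq k1 c] outr_le[of bq k2 c] by linarith
        thus ?thesis using pe by auto
      qed
    qed
    have KC2: "min y r \<le> p" if a: "a < length P" "snd (P!a) = Other" "y \<le> bp!a" for a y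
    proof -
      obtain c where c: "c < length Q" "snd (Q!c) = Other" "bp!a \<le> fst (Q!c)"
        using other_PQ[OF so a(1,2), of "bp!a"] bids_nth[OF a(1)] by auto
      thus ?thesis using KC[OF c(1,2)] bqf[OF c(1)] a(3) by linarith
    qed
    obtain uh where uh: "uh < length P" "snd (P!uh) = Member 0" using pos_exists[of 0] lv by auto
    have uhK: "uh \<in> KS P" using uh by (auto simp: KS_def)
    have KP: "KS P = {uh}"
    proof
      show "KS P \<subseteq> {uh}"
      proof
        fix j assume j: "j \<in> KS P"
        then obtain i where i: "snd (P!j) = Member i" "i < length vs" using HP0 by blast
        hence i0: "i = 0" using lv by simp
        have "\<forall>i<length vs. card {j. j < length P \<and> snd (P!j) = Member i} = 1"
          using hP unfolding honest_profile_def by blast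
        hence c1: "card {j. j < length P \<and> snd (P!j) = Member 0} = 1" using lv by simp
        have "j < length P" using j by (simp add: KS_def)
        hence m1: "j \<in> {j. j < length P \<and> snd (P!j) = Member 0}" using i i0 by simp
        have m2: "uh \<in> {j. j < length P \<and> snd (P!j) = Member 0}" using uh by simp
        have "j = uh" using card1_eq[OF c1 m1 m2] .
        thus "j \<in> {uh}" by simp
      qed
      show "{uh} \<subseteq> KS P" using uhK by auto
    qed
    have notK: "snd (P!j) = Other" if "j < length P" "j \<noteq> uh" for j
    proof -
      have "j \<notin> KS P" using KP that by simp
      thus ?thesis using that unfolding KS_def by simp
    qed
    obtain i where "snd (P!uh) = Member i" "i < length vs" "fst (P!uh) = vs!i" "wv vs P uh = fst (P!uh)"
      using HP0[OF uhK] by blast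
    hence "i = 0" "fst (P!uh) = v" "wv vs P uh = fst (P!uh)" using lv by auto
    hence bu: "bp!uh = v" "wv vs P uh = v" using bids_nth[OF uh(1)] by auto
    have HFu: "weak_util (sopp r) False vs P Ih = gt r vs P Ih uh" using HF KP by simp
    show ?thesis
    proof (cases "conf r bp Ih uh")
      case cP: True
      have HFe: "weak_util (sopp r) False vs P Ih = v - ph" using HFu gt_conf[OF cP] bu by simp
      have "ph \<le> p"
      proof (cases "2 \<le> card Ih")
        case False
        hence "second_bid bp Ih = 0" by (rule sb_small)
        thus ?thesis using p0 r by (simp add: sopp_price_def)
      next
        case True
        obtain x k where xk: "x \<in> Ih" "k \<in> Ih" "second_bid bp Ih = bp!x" "outranks bp k x"
          using sb_real[OF fIh True] by blast
        have xl: "x < length P" "k < length P" using xk incl_lt by fastforce+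
        have phx: "ph = min (bp!x) r" using xk by (simp add: sopp_price_def)
        show ?thesis
        proof (cases "x = uh")
          case False
          thus ?thesis using KC2[OF xl(1) notK[OF xl(1) False], of "bp!x"] phx by simp
        next
          case True
          have ku: "k \<noteq> uh" using xk(4) True outr_irrefl by metis
          have "r \<le> v" using cP xk True bu by (auto simp: conf_def)
          moreover have "v \<le> bp!k" using outr_le[OF xk(4)] True bu by simp
          ultimately have "r \<le> p" using KC2[OF xl(2) notK[OF xl(2) ku], of r] by simp
          thus ?thesis using price_le[of r bp Ih] by linarith
        qed
      qed
      thus ?thesis using Uv HFe by linarith
    next
      case cP: False
      have HFe: "weak_util (sopp r) False vs P Ih = 0" using HFu cP bu bids_nth[OF uh(1)] by (simp add: gt_def)
      have vr: "v < r"
      proof (rule ccontr)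
        assume "\<not> v < r"
        hence "uh \<in> Ih" using uh bu by (auto simp: incl_eq)
        thus False using cP \<open>\<not> v < r\<close> bu by (auto simp: conf_def)
      qed
      obtain a where a: "a < length P" "a \<noteq> uh" "v \<le> bp!a"
      proof (cases "uh \<in> Ih")
        case True
        then obtain k where k: "k \<in> Ih" "outranks bp k uh" using cP vr bu by (auto simp: conf_def)
        have "k \<noteq> uh" using k outr_irrefl by metis
        moreover have "k < length P" using k incl_lt by fastforce
        moreover have "v \<le> bp!k" using outr_le[OF k(2)] bu by simp
        ultimately show ?thesis using that by blast
      next
        case False
        then obtain k1 k2 where "k1 \<in> Ih" "outranks bp k1 uh"
          using incl_out[of uh bp r] uh by auto
        moreover hence "k1 \<noteq> uh" using outr_irrefl by metis
        moreover have "k1 < length P" using \<open>k1 \<in> Ih\<close> incl_lt by fastforce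
        moreover have "v \<le> bp!k1" using outr_le[OF \<open>outranks bp k1 uh\<close>] bu by simp
        ultimately show ?thesis using that by blast
      qed
      have "min v r \<le> p" using KC2[OF a(1) notK[OF a(1,2)] a(3)] .
      thus ?thesis using Uv HFe vr by simp
    qed
  qed
qed

end

lemma gen_scp:
  assumes r: "r > 0" and vsn: "\<forall>v\<in>set vs. 0 \<le> v"
  shows "no_gain (sopp r) True vs"
  unfolding no_gain_def
proof (intro allI impI)
  fix P Q I
  assume a: "honest_profile vs P \<and> dev_profile vs Q \<and> same_others P Q \<and>
        (if True then I \<subseteq> {..<length Q} else I = incl_rule (sopp r) (bids Q))"
  interpret hon r vs P using r vsn a by unfold_locales auto
  show "weak_util (sopp r) True vs Q I \<le> weak_util (sopp r) True vs P (incl_rule (sopp r) (bids P))"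
    using scp_dev a by auto
qed

lemma gen_uic:
  assumes r: "r > 0" and v: "0 \<le> v"
  shows "no_gain (sopp r) False [v]"
  unfolding no_gain_def
proof (intro allI impI)
  fix P Q I
  assume a: "honest_profile [v] P \<and> dev_profile [v] Q \<and> same_others P Q \<and>
        (if False then I \<subseteq> {..<length Q} else I = incl_rule (sopp r) (bids Q))"
  interpret hon r "[v]" P using r v a by unfold_locales auto
  show "weak_util (sopp r) False [v] Q I \<le> weak_util (sopp r) False [v] P (incl_rule (sopp r) (bids P))"
    using uic_dev[of v Q] a by auto
qed

theorem mainTheorem7:
  fixes r :: real
  assumes "r > 0"
  shows "weak_UIC (sopp r) \<and> weak_MIC (sopp r) \<and> (\<forall>c::nat. c \<ge> 1 \<longrightarrow> weak_SCP c (sopp r))"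
  using gen_uic[OF assms] gen_scp[OF assms]
  unfolding weak_UIC_def weak_MIC_def weak_SCP_def by auto

end
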